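(* Let $\xi>0$ be such that $D_{\xi}:=D^TD-\xi^2 I$ is nonsingular. Then for every $\omega\geq 0$, the matrix $G(j\omega)$ has a singular value equal to $\xi$ if and only if $\lambda=j\omega$ is an eigenvalue of the linear operator $\mathcal{L}_{\xi}$, i.e. there exists $u\in\mathcal{D}(\mathcal{L}_{\xi})$, $u\neq 0$, with $\mathcal{L}_{\xi}u=j\omega\, u$.
   Context: Let $n,m,n_u,n_y$ be positive integers, $A_0,\dots,A_m\in\mathbb{R}^{n\times n}$, $B\in\mathbb{R}^{n\times n_u}$, $C\in\mathbb{R}^{n_y\times n}$, $D\in\mathbb{R}^{n_y\times n_u}$, and delays $\tau_1,\dots,\tau_m\geq 0$ with $\tau_{\max}=\max_i\tau_i$. The transfer function is $G(s)=C\left(sI-A_0-\sum_{i=1}^m A_i e^{-\tau_i s}\right)^{-1}B+D$. Standing assumption: the system is stable, i.e. all solutions $s$ of $\det\left(sI-A_0-\sum_{i=1}^m A_i e^{-\tau_i s}\right)=0$ have negative real part. For $\xi>0$ put $D_\xi=D^TD-\xi^2I_{n_u}$ and $\tilde D_\xi=DD^T-\xi^2 I_{n_y}$ (for $\xi>0$ one is nonsingular iff the other is). Define the $2n\times 2n$ matrices $M_0=\begin{bmatrix} A_0-BD_\xi^{-1}D^TC & -BD_\xi^{-1}B^T\\ \xi^2 C^T\tilde D_\xi^{-1}C & -A_0^T+C^TDD_\xi^{-1}B^T\end{bmatrix}$, $M_i=\begin{bmatrix}A_i&0\\0&0\end{bmatrix}$, $M_{-i}=\begin{bmatrix}0&0\\0&-A_i^T\end{bmatrix}$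 for $1\le i\le m$. Let $X=\mathcal{C}([-\tau_{\max},\tau_{\max}],\mathbb{C}^{2n})$ (continuous functions). The operator $\mathcal{L}_\xi$ on $X$ has domain $\mathcal{D}(\mathcal{L}_\xi)=\{\phi\in X:\ \phi'\in X,\ \phi'(0)=M_0\phi(0)+\sum_{i=1}^m(M_i\phi(-\tau_i)+M_{-i}\phi(\tau_i))\}$ and acts by $\mathcal{L}_\xi\phi=\phi'$. *)

theory Defs
  imports "HOL-Analysis.Analysis"
begin

definition cmat :: "real^'b^'a \<Rightarrow> complex^'b^'a" where
  "cmat M = (\<chi> i j. complex_of_real (M$i$j))"

definition cadj :: "complex^'b^'a \<Rightarrow> complex^'a^'b" where
  "cadj M = (\<chi> i j. cnj (M$j$i))"

definition csmult :: "complex \<Rightarrow> complex^'b^'a \<Rightarrow> complex^'b^'a" where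
  "csmult c M = (\<chi> i j. c * M$i$j)"

definition is_singular_value :: "complex^'b^'a \<Rightarrow> real \<Rightarrow> bool" where
  "is_singular_value G \<sigma> \<longleftrightarrow> \<sigma> \<ge> 0 \<and>
     (\<exists>v w. v \<noteq> 0 \<and> w \<noteq> 0 \<and> G *v v = complex_of_real \<sigma> *s w
          \<and> cadj G *v w = complex_of_real \<sigma> *s v)"

definition char_mat :: "nat \<Rightarrow> (nat \<Rightarrow> real^'n^'n) \<Rightarrow> (nat \<Rightarrow> real) \<Rightarrow> complex \<Rightarrow> complex^'n^'n" where
  "char_mat m A tau s = mat s - cmat (A 0)
     - (\<Sum>i\<in>{1..m}. csmult (exp (- complex_of_real (tau i) * s)) (cmat (A i)))"

definition transfer :: "nat \<Rightarrow> (nat \<Rightarrow> real^'n^'n) \<Rightarrow> (nat \<Rightarrow> real) \<Rightarrow> real^'u^'n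
     \<Rightarrow> real^'n^'y \<Rightarrow> real^'u^'y \<Rightarrow> complex \<Rightarrow> complex^'u^'y" where
  "transfer m A tau B C D s = cmat C ** matrix_inv (char_mat m A tau s) ** cmat B + cmat D"

definition Dxi :: "real^'u^'y \<Rightarrow> real \<Rightarrow> real^'u^'u" where
  "Dxi D \<xi> = transpose D ** D - mat (\<xi>\<^sup>2)"

definition Dtxi :: "real^'u^'y \<Rightarrow> real \<Rightarrow> real^'y^'y" where
  "Dtxi D \<xi> = D ** transpose D - mat (\<xi>\<^sup>2)"

definition blockmat :: "'a::zero^'n^'n \<Rightarrow> 'a^'n^'n \<Rightarrow> 'a^'n^'n \<Rightarrow> 'a^'n^'n \<Rightarrow> 'a^('n+'n)^('n+'n)" where
  "blockmat P Q R S = (\<chi> i j. case i of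
       Inl a \<Rightarrow> (case j of Inl b \<Rightarrow> P$a$b | Inr b \<Rightarrow> Q$a$b)
     | Inr a \<Rightarrow> (case j of Inl b \<Rightarrow> R$a$b | Inr b \<Rightarrow> S$a$b))"

definition M0 :: "(nat \<Rightarrow> real^'n^'n) \<Rightarrow> real^'u^'n \<Rightarrow> real^'n^'y \<Rightarrow> real^'u^'y \<Rightarrow> real
     \<Rightarrow> real^('n+'n)^('n+'n)" where
  "M0 A B C D \<xi> = blockmat
     (A 0 - B ** matrix_inv (Dxi D \<xi>) ** transpose D ** C)
     (- (B ** matrix_inv (Dxi D \<xi>) ** transpose B))
     (\<xi>\<^sup>2 *\<^sub>R (transpose C ** matrix_inv (Dtxi D \<xi>) ** C))
     (- transpose (A 0) + transpose C ** D ** matrix_inv (Dxi D \<xi>) ** transpose B)"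

definition Mpos :: "(nat \<Rightarrow> real^'n^'n) \<Rightarrow> nat \<Rightarrow> real^('n+'n)^('n+'n)" where
  "Mpos A i = blockmat (A i) 0 0 0"

definition Mneg :: "(nat \<Rightarrow> real^'n^'n) \<Rightarrow> nat \<Rightarrow> real^('n+'n)^('n+'n)" where
  "Mneg A i = blockmat 0 0 0 (- transpose (A i))"

definition tau_max :: "nat \<Rightarrow> (nat \<Rightarrow> real) \<Rightarrow> real" where
  "tau_max m tau = Max (tau ` {1..m})"

text \<open>phi is in the domain of L_xi with derivative psi (so L_xi phi = psi), phi, psi
  considered as elements of X = C([-tau_max, tau_max], C^{2n}).\<close>
definition in_dom_L :: "nat \<Rightarrow> (nat \<Rightarrow> real^'n^'n) \<Rightarrow> (nat \<Rightarrow> real) \<Rightarrow> real^'u^'n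
     \<Rightarrow> real^'n^'y \<Rightarrow> real^'u^'y \<Rightarrow> real
     \<Rightarrow> (real \<Rightarrow> complex^('n+'n)) \<Rightarrow> (real \<Rightarrow> complex^('n+'n)) \<Rightarrow> bool" where
  "in_dom_L m A tau B C D \<xi> \<phi> \<psi> \<longleftrightarrow>
     (let I = {- tau_max m tau .. tau_max m tau} in
        continuous_on I \<phi> \<and> continuous_on I \<psi> \<and>
        (\<forall>t\<in>I. (\<phi> has_vector_derivative \<psi> t) (at t within I)) \<and>
        \<psi> 0 = cmat (M0 A B C D \<xi>) *v \<phi> 0
              + (\<Sum>i\<in>{1..m}. cmat (Mpos A i) *v \<phi> (- tau i) + cmat (Mneg A i) *v \<phi> (tau i)))"

definition is_eigenvalue_L :: "nat \<Rightarrow> (nat \<Rightarrow> real^'n^'n) \<Rightarrow> (nat \<Rightarrow> real) \<Rightarrow> real^'u^'n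
     \<Rightarrow> real^'n^'y \<Rightarrow> real^'u^'y \<Rightarrow> real \<Rightarrow> complex \<Rightarrow> bool" where
  "is_eigenvalue_L m A tau B C D \<xi> lam \<longleftrightarrow>
     (let I = {- tau_max m tau .. tau_max m tau} in
       \<exists>u \<psi>. in_dom_L m A tau B C D \<xi> u \<psi> \<and> (\<exists>t\<in>I. u t \<noteq> 0) \<and>
              (\<forall>t\<in>I. \<psi> t = lam *s u t))"

end

theory Submission
  imports Defs
begin

lemma cmat_mult: "cmat (X ** Y) = cmat X ** cmat Y"
  by (simp add: cmat_def matrix_matrix_mult_def vec_eq_iff)
lemma cmat_add: "cmat (X + Y) = cmat X + cmat Y"
  by (simp add: cmat_def vec_eq_iff)
lemma cmat_diff: "cmat (X - Y) = cmat X - cmat Y"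
  by (simp add: cmat_def vec_eq_iff)
lemma cmat_uminus: "cmat (- X) = - cmat X"
  by (simp add: cmat_def vec_eq_iff)
lemma cmat_zero: "cmat 0 = 0"
  by (simp add: cmat_def vec_eq_iff)
lemma cmat_mat: "cmat (mat r) = mat (complex_of_real r)"
  by (simp add: cmat_def mat_def vec_eq_iff)
lemma cmat_scaleR: "cmat (r *\<^sub>R X) = csmult (complex_of_real r) (cmat X)"
  by (simp add: cmat_def csmult_def vec_eq_iff)
lemma cmat_transpose: "cmat (transpose X) = cadj (cmat X)"
  by (simp add: cmat_def cadj_def transpose_def vec_eq_iff)

lemma cadj_mult: "cadj (X ** Y) = cadj Y ** cadj X"
  by (simp add: cadj_def matrix_matrix_mult_def vec_eq_iff mult.commute)
lemma cadj_add: "cadj (X + Y) = cadj X + cadj Y"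
  by (simp add: cadj_def vec_eq_iff)
lemma cadj_mat: "cadj (mat c) = mat (cnj c)"
  by (simp add: cadj_def mat_def vec_eq_iff)
lemma cadj_cadj: "cadj (cadj X) = X"
  by (simp add: cadj_def vec_eq_iff)

lemma mv_assoc: "(X ** Y) *v v = X *v (Y *v v)"
  by (simp add: matrix_vector_mul_assoc)
lemma mat_mv: "mat c *v v = c *s (v::'a::comm_semiring_1^'n)"
  by (simp add: mat_def matrix_vector_mult_def vec_eq_iff if_distrib if_distribR cong: if_cong)
lemma csmult_mv: "csmult c X *v v = c *s (X *v v)"
  by (simp add: csmult_def matrix_vector_mult_def vec_eq_iff sum_distrib_left mult.assoc)
lemma sum_mv: "(\<Sum>i\<in>S. X i) *v v = (\<Sum>i\<in>S. X i *v (v::complex^'n))"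
  by (simp add: matrix_vector_mult_def vec_eq_iff sum_distrib_right sum_component flip: sum.swap[of _ UNIV S])
lemma uminus_mv: "(- X) *v v = - (X *v (v::complex^'n))"
  by (simp add: matrix_vector_mult_def vec_eq_iff sum_negf)
lemma mv_uminus: "X *v (- v) = - (X *v (v::complex^'n))"
  by (simp add: matrix_vector_mult_def vec_eq_iff sum_negf)
lemma mv_sum: "X *v (\<Sum>i\<in>S. v i) = (\<Sum>i\<in>S. X *v (v i::complex^'n))"
  by (simp add: matrix_vector_mult_def vec_eq_iff sum_distrib_left sum_component flip: sum.swap[of _ UNIV S])

lemma Dtxi_inv:
  assumes "invertible (Dxi D \<xi>)" "\<xi> > 0"
  shows "invertible (Dtxi D \<xi>)"
proof -
  have e1: "Dtxi D \<xi> *v x = D *v (transpose D *v x) - (\<xi>\<^sup>2) *s x" for x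
    by (simp add: Dtxi_def matrix_vector_mul_assoc matrix_vector_mult_diff_rdistrib mat_mv del: transpose_matrix_vector)
  have e2: "Dxi D \<xi> *v y = transpose D *v (D *v y) - (\<xi>\<^sup>2) *s y" for y
    by (simp add: Dxi_def matrix_vector_mul_assoc matrix_vector_mult_diff_rdistrib mat_mv del: transpose_matrix_vector)
  have "\<forall>x. Dtxi D \<xi> *v x = 0 \<longrightarrow> x = 0"
  proof (intro allI impI)
    fix x assume h: "Dtxi D \<xi> *v x = 0"
    have "Dxi D \<xi> *v (transpose D *v x) = transpose D *v (Dtxi D \<xi> *v x)"
      unfolding e1 e2 by (simp add: matrix_vector_mult_diff_distrib vector_scalar_commute del: transpose_matrix_vector)
    then have "Dxi D \<xi> *v (transpose D *v x) = 0" using h by simp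
    then have t: "transpose D *v x = 0"
      using inj_matrix_vector_mult[OF assms(1)] by (metis matrix_vector_mult_0_right injD)
    have "(\<xi>\<^sup>2) *s x = 0" using h t e1[of x] by simp
    then show "x = 0" using assms(2) by simp
  qed
  then show ?thesis
    using invertible_left_inverse matrix_left_invertible_ker by blast
qed


lemma inv_facts:
  fixes H :: "'a::field^'n^'n"
  assumes "invertible H"
  shows "H ** matrix_inv H = mat 1" "matrix_inv H ** H = mat 1"
proof -
  have "\<exists>A'. H ** A' = mat 1 \<and> A' ** H = mat 1" using assms invertible_def by blast
  then have "H ** matrix_inv H = mat 1 \<and> matrix_inv H ** H = mat 1"
    unfolding matrix_inv_def by (rule someI_ex)
  then show "H ** matrix_inv H = mat 1" "matrix_inv H ** H = mat 1" by auto
qed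

lemma core:
  fixes H Hh :: "complex^'n^'n" and b :: "complex^'u^'n" and bt :: "complex^'n^'u"
    and c :: "complex^'n^'y" and ct :: "complex^'y^'n" and d :: "complex^'u^'y"
    and dt :: "complex^'y^'u" and K :: "complex^'u^'u" and L :: "complex^'y^'y" and \<xi> :: real
  assumes Hinv: "invertible H" and Hh: "Hh = cadj H" and bt: "bt = cadj b" and ct: "ct = cadj c"
    and dt: "dt = cadj d"
    and K1: "K ** (dt ** d - mat (complex_of_real (\<xi>^2))) = mat 1"
    and K2: "(dt ** d - mat (complex_of_real (\<xi>^2))) ** K = mat 1"
    and L1: "L ** (d ** dt - mat (complex_of_real (\<xi>^2))) = mat 1"
    and xi: "\<xi> > 0"
  shows "(\<exists>v w. v \<noteq> 0 \<and> w \<noteq> 0 \<and> (c ** matrix_inv H ** b + d) *v v = complex_of_real \<xi> *s w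
            \<and> cadj (c ** matrix_inv H ** b + d) *v w = complex_of_real \<xi> *s v)
     \<longleftrightarrow> (\<exists>x z. (x \<noteq> 0 \<or> z \<noteq> 0) \<and> H *v x = - (b *v (K *v (dt *v (c *v x) + bt *v z)))
            \<and> Hh *v z = - (ct *v (complex_of_real (\<xi>^2) *s (L *v (c *v x)) + d *v (K *v (bt *v z)))))"
proof -
  define r where "r = complex_of_real \<xi>"
  have r0: "r \<noteq> 0" using xi by (simp add: r_def)
  have r2: "complex_of_real (\<xi>^2) = r * r" by (simp add: r_def power2_eq_square)
  define Hi where "Hi = matrix_inv H"
  define cHi where "cHi = cadj Hi"
  have HHi: "H *v (Hi *v x) = x" "Hi *v (H *v x) = x" for x
    using inv_facts[OF Hinv] by (simp_all add: Hi_def matrix_vector_mul_assoc)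
  have cHi1: "Hh ** cHi = mat 1" "cHi ** Hh = mat 1"
    using inv_facts[OF Hinv] unfolding Hh cHi_def Hi_def
    by (metis cadj_mult cadj_mat complex_cnj_one)+
  have cHHi: "Hh *v (cHi *v x) = x" "cHi *v (Hh *v x) = x" for x
    using cHi1 by (simp_all add: matrix_vector_mul_assoc)
  have Gv: "(c ** matrix_inv H ** b + d) *v v = c *v (Hi *v (b *v v)) + d *v v" for v
    by (simp add: Hi_def matrix_vector_mult_add_rdistrib mv_assoc)
  have Gw: "cadj (c ** matrix_inv H ** b + d) *v w = bt *v (cHi *v (ct *v w)) + dt *v w" for w
    by (simp add: cHi_def Hi_def bt ct dt cadj_add cadj_mult matrix_vector_mult_add_rdistrib mv_assoc)
  have Dx: "(dt ** d - mat (r*r)) *v v = dt *v (d *v v) - (r*r) *s v" for v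
    by (simp add: matrix_vector_mult_diff_rdistrib mv_assoc mat_mv)
  have KDx: "K *v ((dt ** d - mat (r*r)) *v v) = v" "(dt ** d - mat (r*r)) *v (K *v v) = v" for v
    using K1 K2 r2 by (simp_all add: matrix_vector_mul_assoc)
  have LDt: "L *v ((d ** dt - mat (r*r)) *v v) = v" for v
    using L1 r2 by (simp_all add: matrix_vector_mul_assoc)
  have ident: "y - d *v (K *v (dt *v y)) = - ((r*r) *s (L *v y))" for y
  proof -
    define q where "q = y - d *v (K *v (dt *v y))"
    have a: "(d ** dt - mat (r*r)) *v (d *v u) = d *v ((dt ** d - mat (r*r)) *v u)" for u
      by (simp add: matrix_vector_mult_diff_rdistrib mv_assoc mat_mv matrix_vector_mult_diff_distrib vector_scalar_commute)
    have "(d ** dt - mat (r*r)) *v q = - ((r*r) *s y)"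
      unfolding q_def matrix_vector_mult_diff_distrib a KDx(2)
      by (simp add: matrix_vector_mult_diff_rdistrib mv_assoc mat_mv)
    then have "L *v ((d ** dt - mat (r*r)) *v q) = - ((r*r) *s (L *v y))"
      by (simp add: mv_uminus vector_scalar_commute)
    then show ?thesis unfolding LDt q_def .
  qed
  show ?thesis unfolding r_def[symmetric] r2
  proof
    assume "\<exists>v w. v \<noteq> 0 \<and> w \<noteq> 0 \<and> (c ** matrix_inv H ** b + d) *v v = r *s w
            \<and> cadj (c ** matrix_inv H ** b + d) *v w = r *s v"
    then obtain v w where v0: "v \<noteq> 0" and w0: "w \<noteq> 0" and g1: "c *v (Hi *v (b *v v)) + d *v v = r *s w"
      and g2: "bt *v (cHi *v (ct *v w)) + dt *v w = r *s v" unfolding Gv Gw by blast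
    define x where "x = Hi *v (b *v v)"
    define y where "y = cHi *v (ct *v w)"
    define z where "z = r *s y"
    have Hx: "H *v x = b *v v" using HHi by (simp add: x_def)
    have Hy: "Hh *v y = ct *v w" using cHHi by (simp add: y_def)
    have g1': "d *v v = r *s w - c *v x" using g1 x_def by (simp add: algebra_simps)
    have g2': "bt *v y + dt *v w = r *s v" using g2 y_def by simp
    have h1: "(r*r) *s v = bt *v z + r *s (dt *v w)"
      by (simp add: z_def vector_scalar_commute flip: vector_smult_assoc g2' vector_add_ldistrib)
    have h2: "dt *v (r *s w - c *v x) = r *s (dt *v w) - dt *v (c *v x)"
      by (simp add: matrix_vector_mult_diff_distrib vector_scalar_commute)
    have "(dt ** d - mat (r*r)) *v v = - (dt *v (c *v x) + bt *v z)"
      unfolding Dx g1' h1 h2 by (simp add: algebra_simps)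
    then have vK: "v = - (K *v (dt *v (c *v x) + bt *v z))"
      using KDx(1)[of v] by (metis mv_uminus)
    show "\<exists>x z. (x \<noteq> 0 \<or> z \<noteq> 0) \<and> H *v x = - (b *v (K *v (dt *v (c *v x) + bt *v z)))
            \<and> Hh *v z = - (ct *v ((r * r) *s (L *v (c *v x)) + d *v (K *v (bt *v z))))"
    proof (intro exI conjI)
      show "x \<noteq> 0 \<or> z \<noteq> 0" using v0 vK by auto
      show "H *v x = - (b *v (K *v (dt *v (c *v x) + bt *v z)))"
        using Hx vK by (simp add: mv_uminus)
      have dv: "d *v v = - (d *v (K *v (dt *v (c *v x)))) - d *v (K *v (bt *v z))"
        by (simp add: vK mv_uminus matrix_vector_right_distrib matrix_vector_mult_diff_distrib)
      have "r *s w = c *v x + d *v v" using g1' by simp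
      also have "\<dots> = (c *v x - d *v (K *v (dt *v (c *v x)))) - d *v (K *v (bt *v z))"
        unfolding dv by (simp add: algebra_simps)
      also have "\<dots> = - ((r*r) *s (L *v (c *v x)) + d *v (K *v (bt *v z)))"
        unfolding ident by simp
      finally have rw: "r *s w = - ((r*r) *s (L *v (c *v x)) + d *v (K *v (bt *v z)))" .
      show "Hh *v z = - (ct *v ((r * r) *s (L *v (c *v x)) + d *v (K *v (bt *v z))))"
      proof -
        have "Hh *v z = r *s (Hh *v y)" by (simp add: z_def vector_scalar_commute)
        also have "\<dots> = ct *v (r *s w)" by (simp add: Hy vector_scalar_commute)
        also have "\<dots> = - (ct *v ((r * r) *s (L *v (c *v x)) + d *v (K *v (bt *v z))))"
          unfolding rw by (simp only: mv_uminus)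
        finally show ?thesis .
      qed
    qed
  next
    assume "\<exists>x z. (x \<noteq> 0 \<or> z \<noteq> 0) \<and> H *v x = - (b *v (K *v (dt *v (c *v x) + bt *v z)))
            \<and> Hh *v z = - (ct *v ((r * r) *s (L *v (c *v x)) + d *v (K *v (bt *v z))))"
    then obtain x z where xz: "x \<noteq> 0 \<or> z \<noteq> 0" and E1: "H *v x = - (b *v (K *v (dt *v (c *v x) + bt *v z)))"
      and E2: "Hh *v z = - (ct *v ((r * r) *s (L *v (c *v x)) + d *v (K *v (bt *v z))))" by blast
    define v where "v = - (K *v (dt *v (c *v x) + bt *v z))"
    define w where "w = inverse r *s (c *v x + d *v v)"
    define y where "y = inverse r *s z"
    have Hx: "H *v x = b *v v" using E1 by (simp add: v_def mv_uminus)
    have x: "x = Hi *v (b *v v)" using HHi(2)[of x] Hx by simp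
    have rw: "r *s w = c *v x + d *v v" using r0 by (simp add: w_def vector_smult_assoc)
    have rw2: "r *s w = - ((r*r) *s (L *v (c *v x)) + d *v (K *v (bt *v z)))"
    proof -
      have "r *s w = (c *v x - d *v (K *v (dt *v (c *v x)))) - d *v (K *v (bt *v z))"
        unfolding rw v_def by (simp add: mv_uminus matrix_vector_right_distrib algebra_simps)
      then show ?thesis unfolding ident by simp
    qed
    have "Hh *v z = ct *v (r *s w)" unfolding E2 rw2 by (simp only: mv_uminus)
    then have "Hh *v y = ct *v w" using r0
      by (simp add: y_def vector_scalar_commute vector_smult_assoc)
    then have y: "y = cHi *v (ct *v w)" using cHHi(2)[of y] by simp
    have Dxv: "(dt ** d - mat (r*r)) *v v = - (dt *v (c *v x) + bt *v z)"
      unfolding v_def mv_uminus KDx(2) ..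
    have a1: "r *s (bt *v y) = bt *v z"
      using r0 by (simp add: y_def vector_scalar_commute vector_smult_assoc)
    have a2: "r *s (dt *v w) = dt *v (c *v x) + dt *v (d *v v)"
      by (simp add: rw matrix_vector_right_distrib flip: vector_scalar_commute)
    have "r *s (bt *v y + dt *v w) = bt *v z + dt *v (c *v x) + dt *v (d *v v)"
      unfolding vector_add_ldistrib a1 a2 by (simp add: add.assoc)
    also have "\<dots> = (r*r) *s v"
    proof -
      have dd: "dt *v (d *v v) = - (dt *v (c *v x) + bt *v z) + (r*r) *s v"
        using Dxv unfolding Dx by (simp only: diff_eq_eq)
      show ?thesis unfolding dd by (simp add: algebra_simps)
    qed
    also have "\<dots> = r *s (r *s v)" by (simp add: vector_smult_assoc)
    finally have g2: "bt *v y + dt *v w = r *s v" using r0 by (metis vector_mul_lcancel)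
    show "\<exists>v w. v \<noteq> 0 \<and> w \<noteq> 0 \<and> (c ** matrix_inv H ** b + d) *v v = r *s w
            \<and> cadj (c ** matrix_inv H ** b + d) *v w = r *s v"
    proof (intro exI conjI)
      show v0: "v \<noteq> 0"
      proof
        assume "v = 0"
        then have "x = 0" using x by simp
        then have "w = 0" using \<open>v = 0\<close> by (simp add: w_def)
        then have "y = 0" using y by simp
        then have "z = 0" using r0 by (simp add: y_def)
        then show False using xz \<open>x = 0\<close> by simp
      qed
      show "w \<noteq> 0"
      proof
        assume "w = 0"
        then have "r *s v = 0" using g2 y by simp
        then show False using r0 v0 by simp
      qed
      show "(c ** matrix_inv H ** b + d) *v v = r *s w" unfolding Gv rw x[symmetric] ..
      show "cadj (c ** matrix_inv H ** b + d) *v w = r *s v" unfolding Gw y[symmetric] by (rule g2)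
    qed
  qed
qed


lemma cadj_char: "cadj (char_mat m A tau s) = mat (cnj s) - cmat (transpose (A 0))
   - (\<Sum>i\<in>{1..m}. csmult (cnj (exp (- complex_of_real (tau i) * s))) (cmat (transpose (A i))))"
  by (simp add: vec_eq_iff cadj_def char_mat_def mat_def csmult_def cmat_def transpose_def)

definition join :: "'a^'n \<Rightarrow> 'a^'n \<Rightarrow> 'a^('n+'n)" where
  "join x z = (\<chi> i. case i of Inl a \<Rightarrow> x$a | Inr a \<Rightarrow> z$a)"

lemma join_split: "\<phi> = join (\<chi> a. \<phi>$Inl a) (\<chi> a. \<phi>$Inr a)"
  by (simp add: join_def vec_eq_iff split: sum.splits)
lemma join_eq: "join x z = join x' z' \<longleftrightarrow> x = x' \<and> z = z'"
  apply (simp add: join_def vec_eq_iff split: sum.splits)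
  by (metis sum.case)
lemma join_zero: "join x z = 0 \<longleftrightarrow> x = 0 \<and> z = 0"
  apply (simp add: join_def vec_eq_iff split: sum.splits)
  by (metis sum.case)
lemma join_add: "join x z + join x' z' = join (x + x') (z + z')"
  by (simp add: join_def vec_eq_iff split: sum.splits)
lemma join_smult: "c *s join x z = join (c *s x) (c *s z)"
  by (simp add: join_def vec_eq_iff split: sum.splits)
lemma join_sum: "(\<Sum>i\<in>S. join (f i) (g i)) = join (\<Sum>i\<in>S. f i) (\<Sum>i\<in>S. g i)"
  by (simp add: join_def vec_eq_iff split: sum.splits)

lemma sum_UNIV_Plus: "sum g (UNIV::('a::finite + 'b::finite) set) = sum (g \<circ> Inl) UNIV + sum (g \<circ> Inr) UNIV"
  using sum.Plus[of "UNIV::'a set" "UNIV::'b set" g] by simp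

lemma blockmat_mv: "blockmat P Q R S *v join x z = join (P *v x + Q *v z) (R *v x + S *v z)"
  by (simp add: vec_eq_iff blockmat_def join_def matrix_vector_mult_def sum_UNIV_Plus sum.distrib split: sum.splits)

lemma cmat_blockmat: "cmat (blockmat P Q R S) = blockmat (cmat P) (cmat Q) (cmat R) (cmat S)"
  by (simp add: vec_eq_iff blockmat_def cmat_def split: sum.splits)

lemma block_eq:
  fixes P Q R S :: "complex^'n^'n" and Ap An :: "nat \<Rightarrow> complex^'n^'n" and ep en :: "nat \<Rightarrow> complex"
  shows "(s *s join x z = blockmat P Q R S *v join x z + (\<Sum>i\<in>I. blockmat (Ap i) 0 0 0 *v (ep i *s join x z)
            + blockmat 0 0 0 (An i) *v (en i *s join x z)))
   \<longleftrightarrow> (s *s x = P *v x + Q *v z + (\<Sum>i\<in>I. ep i *s (Ap i *v x)))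
      \<and> (s *s z = R *v x + S *v z + (\<Sum>i\<in>I. en i *s (An i *v z)))"
  by (simp add: join_smult blockmat_mv join_add join_sum join_eq vector_scalar_commute)

lemma lin_equiv: "(a::'a::ab_group_add) + b = - (c - d) \<Longrightarrow> (a = - b) \<longleftrightarrow> (c = d)"
  by (metis add_eq_0_iff2 eq_iff_diff_eq_0 neg_0_equal_iff_equal)


lemma bl_smult: "bounded_linear (\<lambda>c::complex. c *s (v::complex^'n))"
  unfolding linear_conv_bounded_linear[symmetric]
  apply (rule linearI)
   apply (simp add: vector_sadd_rdistrib)
  apply (simp add: vec_eq_iff)
  done

lemma deriv_expc: "((\<lambda>t::real. exp (lam * complex_of_real t)) has_vector_derivative (lam * exp (lam * complex_of_real t))) (at t within S)"
proof -
  have "((\<lambda>z. exp (lam * z)) has_field_derivative (lam * exp (lam * complex_of_real t))) (at (complex_of_real t))"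
    by (auto intro!: derivative_eq_intros)
  then show ?thesis
    using has_vector_derivative_real_field by blast
qed

lemma deriv_exp: "((\<lambda>t::real. exp (lam * complex_of_real t) *s v) has_vector_derivative
     (exp (lam * complex_of_real t) *s (lam *s (v::complex^'n)))) (at t within S)"
  using bounded_linear.has_vector_derivative[OF bl_smult[of v] deriv_expc[of lam t S]]
  by (simp add: vector_smult_assoc mult.commute)

lemma ode_unique:
  fixes u \<psi> :: "real \<Rightarrow> complex^'n"
  assumes I: "convex I" "0 \<in> I"
    and d: "\<And>t. t \<in> I \<Longrightarrow> (u has_vector_derivative \<psi> t) (at t within I)"
    and e: "\<And>t. t \<in> I \<Longrightarrow> \<psi> t = lam *s u t"
    and t: "t \<in> I"
  shows "u t = exp (lam * complex_of_real t) *s u 0"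
proof -
  have "u t $ k = exp (lam * complex_of_real t) * u 0 $ k" for k
  proof -
    define g where "g s = exp ((- lam) * complex_of_real s) * u s $ k" for s
    have "(g has_vector_derivative 0) (at s within I)" if s: "s \<in> I" for s
    proof -
      have uk: "((\<lambda>s. u s $ k) has_vector_derivative (lam * u s $ k)) (at s within I)"
        using bounded_linear.has_vector_derivative[OF bounded_linear_vec_nth d[OF s], of k] e[OF s]
        by simp
      show ?thesis
        unfolding g_def
        by (rule has_vector_derivative_eq_rhs[OF has_vector_derivative_mult[OF deriv_expc uk]])
           (simp add: algebra_simps)
    qed
    then obtain c where c: "\<And>s. s \<in> I \<Longrightarrow> g s = c"
      using has_vector_derivative_zero_constant[OF I(1)] by metis
    have "g t = g 0" using c t I(2) by metis
    then have "exp (- lam * complex_of_real t) * u t $ k = u 0 $ k" by (simp add: g_def)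
    then have "exp (lam * complex_of_real t) * (exp (- lam * complex_of_real t) * u t $ k)
        = exp (lam * complex_of_real t) * u 0 $ k" by simp
    then show ?thesis by (simp add: mult.assoc[symmetric] exp_add[symmetric])
  qed
  then show ?thesis by (simp add: vec_eq_iff)
qed

lemma tau_max_props:
  assumes m1: "m \<ge> 1" and tau: "\<forall>i\<in>{1..m}. tau i \<ge> 0"
  shows "\<forall>i\<in>{1..m}. tau i \<le> tau_max m tau" "tau_max m tau \<ge> 0"
proof -
  show a: "\<forall>i\<in>{1..m}. tau i \<le> tau_max m tau"
    unfolding tau_max_def by (simp add: Max_ge)
  have "tau 1 \<le> tau_max m tau" using a m1 by simp
  moreover have "tau 1 \<ge> 0" using tau m1 by simp
  ultimately show "tau_max m tau \<ge> 0" by linarith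
qed

lemma eig_iff:
  assumes m1: "m \<ge> 1" and tau: "\<forall>i\<in>{1..m}. tau i \<ge> 0"
  shows "is_eigenvalue_L m A tau B C D \<xi> lam \<longleftrightarrow> (\<exists>\<phi>. \<phi> \<noteq> 0 \<and> lam *s \<phi> = cmat (M0 A B C D \<xi>) *v \<phi>
     + (\<Sum>i\<in>{1..m}. cmat (Mpos A i) *v (exp (- complex_of_real (tau i) * lam) *s \<phi>)
         + cmat (Mneg A i) *v (exp (complex_of_real (tau i) * lam) *s \<phi>)))"
    (is "?L \<longleftrightarrow> (\<exists>\<phi>. \<phi> \<noteq> 0 \<and> ?E \<phi>)")
proof -
  define T where "T = tau_max m tau"
  define I where "I = {-T..T}"
  have T: "\<forall>i\<in>{1..m}. tau i \<le> T" "T \<ge> 0" using tau_max_props[OF m1 tau] by (simp_all add: T_def)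
  have I0: "0 \<in> I" using T by (simp add: I_def)
  have Itau: "tau i \<in> I" "- tau i \<in> I" if "i \<in> {1..m}" for i
  proof -
    have "tau i \<le> T" "tau i \<ge> 0" using T tau that by auto
    then show "tau i \<in> I" "- tau i \<in> I" by (auto simp: I_def)
  qed
  have cI: "convex I" by (simp add: I_def)
  show ?thesis
  proof
    assume ?L
    then obtain u \<psi> where dom: "in_dom_L m A tau B C D \<xi> u \<psi>" and t0: "\<exists>t\<in>I. u t \<noteq> 0"
      and e: "\<forall>t\<in>I. \<psi> t = lam *s u t"
      unfolding is_eigenvalue_L_def Let_def I_def T_def by blast
    have d: "\<And>t. t \<in> I \<Longrightarrow> (u has_vector_derivative \<psi> t) (at t within I)"
      and bc: "\<psi> 0 = cmat (M0 A B C D \<xi>) *v u 0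
              + (\<Sum>i\<in>{1..m}. cmat (Mpos A i) *v u (- tau i) + cmat (Mneg A i) *v u (tau i))"
      using dom unfolding in_dom_L_def Let_def I_def T_def by auto
    have uf: "u t = exp (lam * complex_of_real t) *s u 0" if "t \<in> I" for t
      using ode_unique[OF cI I0 d _ that] e by blast
    show "\<exists>\<phi>. \<phi> \<noteq> 0 \<and> ?E \<phi>"
    proof (intro exI conjI)
      show "u 0 \<noteq> 0" using t0 uf by auto
      have "\<psi> 0 = lam *s u 0" using e I0 by blast
      moreover have "(\<Sum>i\<in>{1..m}. cmat (Mpos A i) *v u (- tau i) + cmat (Mneg A i) *v u (tau i))
         = (\<Sum>i\<in>{1..m}. cmat (Mpos A i) *v (exp (- complex_of_real (tau i) * lam) *s u 0)
         + cmat (Mneg A i) *v (exp (complex_of_real (tau i) * lam) *s u 0))"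
        by (rule sum.cong) (simp_all add: uf Itau mult.commute)
      ultimately show "?E (u 0)" using bc by simp
    qed
  next
    assume "\<exists>\<phi>. \<phi> \<noteq> 0 \<and> ?E \<phi>"
    then obtain \<phi> where n0: "\<phi> \<noteq> 0" and E: "?E \<phi>" by blast
    define u where "u t = exp (lam * complex_of_real t) *s \<phi>" for t
    define \<psi> where "\<psi> t = exp (lam * complex_of_real t) *s (lam *s \<phi>)" for t
    have du: "(u has_vector_derivative \<psi> t) (at t within I)" for t
      unfolding u_def[abs_def] \<psi>_def by (rule deriv_exp)
    have "in_dom_L m A tau B C D \<xi> u \<psi>"
      unfolding in_dom_L_def Let_def I_def[symmetric] T_def[symmetric]
    proof (intro conjI ballI)
      show "continuous_on I u" by (rule continuous_on_vector_derivative[OF du])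
      show "continuous_on I \<psi>"
        by (rule continuous_on_vector_derivative) (unfold \<psi>_def[abs_def], rule deriv_exp)
      show "(u has_vector_derivative \<psi> t) (at t within I)" for t by (rule du)
      have "(\<Sum>i\<in>{1..m}. cmat (Mpos A i) *v u (- tau i) + cmat (Mneg A i) *v u (tau i))
         = (\<Sum>i\<in>{1..m}. cmat (Mpos A i) *v (exp (- complex_of_real (tau i) * lam) *s \<phi>)
         + cmat (Mneg A i) *v (exp (complex_of_real (tau i) * lam) *s \<phi>))"
        by (rule sum.cong) (simp_all add: u_def mult.commute)
      then show "\<psi> 0 = cmat (M0 A B C D \<xi>) *v u 0
              + (\<Sum>i\<in>{1..m}. cmat (Mpos A i) *v u (- tau i) + cmat (Mneg A i) *v u (tau i))"
        using E by (simp add: u_def \<psi>_def)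
    qed
    moreover have "\<exists>t\<in>I. u t \<noteq> 0" using I0 n0 by (auto simp: u_def)
    moreover have "\<forall>t\<in>I. \<psi> t = lam *s u t"
      by (simp add: u_def \<psi>_def vector_smult_assoc mult.commute)
    ultimately show ?L
      unfolding is_eigenvalue_L_def Let_def I_def T_def by blast
  qed
qed


lemma lin_equiv2: "(a::'a::ab_group_add) + b = c - d \<Longrightarrow> (a = - b) \<longleftrightarrow> (c = d)"
  by (metis add_eq_0_iff2 eq_iff_diff_eq_0)

lemma ab1: "((l::'a::ab_group_add) - a - s) + (p + q) = l - ((a - p) + -q + s)"
  by (simp add: algebra_simps)

lemma eq1_gen:
  fixes x :: "complex^'n" and z :: "complex^'n" and a0 :: "complex^'n^'n" and b :: "complex^'u^'n"
  assumes Hx: "Hx = lam *s x - a0 *v x - S"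
  shows "(lam *s x = (a0 - b ** K ** dt ** c) *v x + (-(b ** K ** bt)) *v z + S)
     \<longleftrightarrow> Hx = -(b *v (K *v (dt *v (c *v x) + bt *v z)))"
  apply (rule sym, rule lin_equiv2)
  unfolding Hx matrix_vector_mult_diff_rdistrib mv_assoc uminus_mv matrix_vector_right_distrib
  by (rule ab1)

lemma ab2: "(- l - a - s) + (p + q) = -(l - (p + (-a + q) + - s))" for l :: "'a::ab_group_add"
  by (simp add: algebra_simps)

lemma eq2_gen:
  fixes x :: "complex^'n" and z :: "complex^'n" and a0t :: "complex^'n^'n" and ct :: "complex^'y^'n"
    and An :: "nat \<Rightarrow> complex^'n^'n"
  assumes Hz: "Hhz = - (lam *s z) - a0t *v z - (\<Sum>i\<in>I. en i *s (An i *v z))"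
  shows "(lam *s z = (csmult r (ct ** L ** c)) *v x + (- a0t + ct ** d ** K ** bt) *v z
        + (\<Sum>i\<in>I. en i *s ((- An i) *v z)))
     \<longleftrightarrow> Hhz = - (ct *v (r *s (L *v (c *v x)) + d *v (K *v (bt *v z))))"
  apply (rule sym, rule lin_equiv)
  unfolding Hz matrix_vector_mult_add_rdistrib mv_assoc uminus_mv csmult_mv matrix_vector_right_distrib
    vector_scalar_commute vector_smult_rneg sum_negf
  by (rule ab2)


theorem theorem1:
  fixes m :: nat
    and A :: "nat \<Rightarrow> real^'n^'n"
    and tau :: "nat \<Rightarrow> real"
    and B :: "real^'u^'n" and C :: "real^'n^'y" and D :: "real^'u^'y"
    and \<xi> \<omega> :: real
  assumes "m \<ge> 1"
    and "\<forall>i\<in>{1..m}. tau i \<ge> 0"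
    and stable: "\<forall>s. det (char_mat m A tau s) = 0 \<longrightarrow> Re s < 0"
    and "\<xi> > 0"
    and "invertible (Dxi D \<xi>)"
    and "\<omega> \<ge> 0"
  shows "is_singular_value (transfer m A tau B C D (\<i> * complex_of_real \<omega>)) \<xi>
     \<longleftrightarrow> is_eigenvalue_L m A tau B C D \<xi> (\<i> * complex_of_real \<omega>)"
proof -
  note m1 = assms(1) and tau = assms(2) and xi = assms(4) and Dinv = assms(5)
  define lam where "lam = \<i> * complex_of_real \<omega>"
  define H where "H = char_mat m A tau lam"
  have Hinv: "invertible H"
    unfolding invertible_det_nz H_def using stable by (auto simp: lam_def)
  define K where "K = cmat (matrix_inv (Dxi D \<xi>))"
  define L where "L = cmat (matrix_inv (Dtxi D \<xi>))"
  have cDx: "cmat (Dxi D \<xi>) = cadj (cmat D) ** cmat D - mat (complex_of_real (\<xi>^2))"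
    by (simp add: Dxi_def cmat_diff cmat_mult cmat_transpose cmat_mat)
  have cDt: "cmat (Dtxi D \<xi>) = cmat D ** cadj (cmat D) - mat (complex_of_real (\<xi>^2))"
    by (simp add: Dtxi_def cmat_diff cmat_mult cmat_transpose cmat_mat)
  have K1: "K ** (cadj (cmat D) ** cmat D - mat (complex_of_real (\<xi>^2))) = mat 1"
    using inv_facts(2)[OF Dinv] unfolding K_def cDx[symmetric] cmat_mult[symmetric] by (simp add: cmat_mat)
  have K2: "(cadj (cmat D) ** cmat D - mat (complex_of_real (\<xi>^2))) ** K = mat 1"
    using inv_facts(1)[OF Dinv] unfolding K_def cDx[symmetric] cmat_mult[symmetric] by (simp add: cmat_mat)
  have L1: "L ** (cmat D ** cadj (cmat D) - mat (complex_of_real (\<xi>^2))) = mat 1"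
    using inv_facts(2)[OF Dtxi_inv[OF Dinv xi]] unfolding L_def cDt[symmetric] cmat_mult[symmetric] by (simp add: cmat_mat)
  note core_inst = core[where H=H and Hh="cadj H" and b="cmat B" and bt="cadj (cmat B)"
      and c="cmat C" and ct="cadj (cmat C)" and d="cmat D" and dt="cadj (cmat D)" and K=K and L=L and \<xi>=\<xi>,
      OF Hinv refl refl refl refl K1 K2 L1 xi]
  have SV: "is_singular_value (transfer m A tau B C D lam) \<xi> \<longleftrightarrow>
     (\<exists>v w. v \<noteq> 0 \<and> w \<noteq> 0 \<and> (cmat C ** matrix_inv H ** cmat B + cmat D) *v v = complex_of_real \<xi> *s w
            \<and> cadj (cmat C ** matrix_inv H ** cmat B + cmat D) *v w = complex_of_real \<xi> *s v)"
    using xi by (simp add: is_singular_value_def transfer_def H_def)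
  define ep where "ep i = exp (- complex_of_real (tau i) * lam)" for i
  define en where "en i = exp (complex_of_real (tau i) * lam)" for i
  have cnj_ep: "cnj (ep i) = en i" for i
    by (simp add: ep_def en_def exp_cnj lam_def)
  have cnj_lam: "cnj lam = - lam" by (simp add: lam_def)
  have Hx: "H *v x = lam *s x - cmat (A 0) *v x - (\<Sum>i\<in>{1..m}. ep i *s (cmat (A i) *v x))" for x
    by (simp add: H_def char_mat_def matrix_vector_mult_diff_rdistrib mat_mv sum_mv csmult_mv ep_def)
  have Hhz: "cadj H *v z = - (lam *s z) - cadj (cmat (A 0)) *v z - (\<Sum>i\<in>{1..m}. en i *s (cadj (cmat (A i)) *v z))" for z
    unfolding H_def cadj_char
    by (simp add: matrix_vector_mult_diff_rdistrib mat_mv sum_mv csmult_mv cmat_transpose cnj_lam cnj_ep[symmetric] ep_def)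
  have M0: "cmat (M0 A B C D \<xi>) = blockmat
     (cmat (A 0) - cmat B ** K ** cadj (cmat D) ** cmat C)
     (- (cmat B ** K ** cadj (cmat B)))
     (csmult (complex_of_real (\<xi>\<^sup>2)) (cadj (cmat C) ** L ** cmat C))
     (- cadj (cmat (A 0)) + cadj (cmat C) ** cmat D ** K ** cadj (cmat B))"
    by (simp add: M0_def cmat_blockmat cmat_diff cmat_add cmat_uminus cmat_mult cmat_transpose cmat_scaleR K_def L_def)
  have Mp: "cmat (Mpos A i) = blockmat (cmat (A i)) 0 0 0" for i
    by (simp add: Mpos_def cmat_blockmat cmat_zero)
  have Mn: "cmat (Mneg A i) = blockmat 0 0 0 (- cadj (cmat (A i)))" for i
    by (simp add: Mneg_def cmat_blockmat cmat_zero cmat_uminus cmat_transpose)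
  have EQ1: "(lam *s x = (cmat (A 0) - cmat B ** K ** cadj (cmat D) ** cmat C) *v x
        + (- (cmat B ** K ** cadj (cmat B))) *v z + (\<Sum>i\<in>{1..m}. ep i *s (cmat (A i) *v x)))
     \<longleftrightarrow> H *v x = - (cmat B *v (K *v (cadj (cmat D) *v (cmat C *v x) + cadj (cmat B) *v z)))" for x z
    by (rule eq1_gen[OF Hx])
  have EQ2: "(lam *s z = (csmult (complex_of_real (\<xi>\<^sup>2)) (cadj (cmat C) ** L ** cmat C)) *v x
        + (- cadj (cmat (A 0)) + cadj (cmat C) ** cmat D ** K ** cadj (cmat B)) *v z
        + (\<Sum>i\<in>{1..m}. en i *s ((- cadj (cmat (A i))) *v z)))
     \<longleftrightarrow> cadj H *v z = - (cadj (cmat C) *v (complex_of_real (\<xi>^2) *s (L *v (cmat C *v x))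
             + cmat D *v (K *v (cadj (cmat B) *v z))))" for x z
    by (rule eq2_gen[OF Hhz])
  have EIG: "is_eigenvalue_L m A tau B C D \<xi> lam \<longleftrightarrow>
     (\<exists>x z. (x \<noteq> 0 \<or> z \<noteq> 0) \<and> H *v x = - (cmat B *v (K *v (cadj (cmat D) *v (cmat C *v x) + cadj (cmat B) *v z)))
            \<and> cadj H *v z = - (cadj (cmat C) *v (complex_of_real (\<xi>^2) *s (L *v (cmat C *v x))
             + cmat D *v (K *v (cadj (cmat B) *v z)))))" (is "_ \<longleftrightarrow> ?R")
  proof -
    have "is_eigenvalue_L m A tau B C D \<xi> lam \<longleftrightarrow> (\<exists>x z. join x z \<noteq> 0 \<and> lam *s join x z = cmat (M0 A B C D \<xi>) *v join x z
     + (\<Sum>i\<in>{1..m}. cmat (Mpos A i) *v (ep i *s join x z)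
         + cmat (Mneg A i) *v (en i *s join x z)))"
      unfolding eig_iff[OF m1 tau] ep_def en_def
    proof
      assume "\<exists>\<phi>. \<phi> \<noteq> 0 \<and> lam *s \<phi> = cmat (M0 A B C D \<xi>) *v \<phi>
     + (\<Sum>i\<in>{1..m}. cmat (Mpos A i) *v (exp (- complex_of_real (tau i) * lam) *s \<phi>)
         + cmat (Mneg A i) *v (exp (complex_of_real (tau i) * lam) *s \<phi>))"
      then obtain \<phi> where h: "\<phi> \<noteq> 0 \<and> lam *s \<phi> = cmat (M0 A B C D \<xi>) *v \<phi>
     + (\<Sum>i\<in>{1..m}. cmat (Mpos A i) *v (exp (- complex_of_real (tau i) * lam) *s \<phi>)
         + cmat (Mneg A i) *v (exp (complex_of_real (tau i) * lam) *s \<phi>))" by blast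
      show "\<exists>x z. join x z \<noteq> 0 \<and> lam *s join x z = cmat (M0 A B C D \<xi>) *v join x z
     + (\<Sum>i\<in>{1..m}. cmat (Mpos A i) *v (exp (- complex_of_real (tau i) * lam) *s join x z)
         + cmat (Mneg A i) *v (exp (complex_of_real (tau i) * lam) *s join x z))"
        apply (rule exI[of _ "\<chi> a. \<phi>$Inl a"], rule exI[of _ "\<chi> a. \<phi>$Inr a"])
        unfolding join_split[symmetric] by (rule h)
    qed blast
    also have "\<dots> \<longleftrightarrow> ?R"
      unfolding M0 Mp Mn block_eq join_zero EQ1 EQ2 by blast
    finally show ?thesis .
  qed
  show ?thesis
    unfolding lam_def[symmetric] SV EIG by (rule core_inst)
qed

end
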